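(* For all $\delta,k\in\mathbb N^+$ and $T_{\max}\ge 4$, there is an infinite family of temporal graphs $\{\mathcal G_n\}_{n\in\mathbb N}$ with lifetime $T_{\max}$ such that each $\mathcal G_n$ has $\Theta(n)$ nodes and the minimum number of rounds required by any Discoverer to win the temporal graph discovery game on $\mathcal G_n$ (with parameters $T_{\max},\delta,k$) grows in $\Omega\big(n(T_{\max}-3)/(\delta k)\big)$.
   Context: A temporal graph $\mathcal G=(V,E,\lambda)$ with lifetime $T_{\max}$ consists of a finite undirected static graph $(V,E)$ and a labeling $\lambda:E\to\{1,\dots,T_{\max}\}$; edge $e$ is present only at time $\lambda(e)$. Infection model with parameter $\delta$: a set $S\subseteq V\times[0,T_{\max}]$ of seed infections is given; a seed $(u,t)$ makes $u$ infected at time $t$; otherwise a susceptible node $u$ becomes infected at time $t$ iff some neighbour $v$ infectious at time $t$ has $\lambda(uv)=t$ (with exactly one infector recorded if several exist). A node infected at time $t$ is infectious at times $t+1,\dots,t+\delta$ and resistant afterwards. The infection log records triples $(u,v,t)$ ($u$ infected $v$ at time $t$; seeds as $(u,u,t)$); a log is consistent with $S$ if some infection chain seeded by $S$ produces it. Temporal graph discovery game with parameters $T_{\max},\delta,k$: the Discoverer knows $V$ and $E$; each round it submits at most $k$ seed infections and the Adversary answers with a consistent infection log under some labeling consistent with all previous answers (adaptively chosen). The Discoverer wins when it submits a labeling that matches the Adversary's final labeling consistent with all logs, i.e. effectively iff the labeling is uniquely determined by the logs. *)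

theory Defs
  imports Complex_Main
begin

definition simple_graph :: "nat set \<Rightarrow> nat set set \<Rightarrow> bool" where
  "simple_graph V E \<longleftrightarrow> finite V \<and>
     E \<subseteq> {{u, v} | u v. u \<in> V \<and> v \<in> V \<and> u \<noteq> v}"

text \<open>A labeling of E with lifetime Tmax: values in 1..Tmax on edges; normalised to 0
  outside E so that labelings are compared only on E.\<close>
definition labeling :: "nat set set \<Rightarrow> nat \<Rightarrow> (nat set \<Rightarrow> nat) \<Rightarrow> bool" where
  "labeling E Tmax lab \<longleftrightarrow> (\<forall>e\<in>E. 1 \<le> lab e \<and> lab e \<le> Tmax) \<and> (\<forall>e. e \<notin> E \<longrightarrow> lab e = 0)"

text \<open>L is an infection log (triples (infector, infected, time); seeds as (u,u,t))
  produced by some infection chain seeded by S, under labeling lab, with parameter delta.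
  A node infected at time t is infectious at times t+1..t+delta.\<close>
definition valid_log ::
  "nat set \<Rightarrow> nat set set \<Rightarrow> nat \<Rightarrow> nat \<Rightarrow> (nat set \<Rightarrow> nat) \<Rightarrow> (nat \<times> nat) set
    \<Rightarrow> (nat \<times> nat \<times> nat) set \<Rightarrow> bool" where
  "valid_log V E Tmax \<delta> lab S L \<longleftrightarrow>
     L \<subseteq> V \<times> V \<times> {0..Tmax} \<and>
     (\<forall>u v t u' t'. (u, v, t) \<in> L \<and> (u', v, t') \<in> L \<longrightarrow> u = u' \<and> t = t') \<and>
     (\<forall>u v t. (u, v, t) \<in> L \<longrightarrow>
        (if (v, t) \<in> S then u = v
         else u \<noteq> v \<and> {u, v} \<in> E \<and> lab {u, v} = t \<and>
              (\<exists>w t'. (w, u, t') \<in> L \<and> t' < t \<and> t \<le> t' + \<delta>))) \<and>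
     (\<forall>v\<in>V. \<forall>t\<le>Tmax.
        (\<not> (\<exists>u t'. (u, v, t') \<in> L \<and> t' < t)) \<and>
        ((v, t) \<in> S \<or>
         (\<exists>u w t'. (w, u, t') \<in> L \<and> t' < t \<and> t \<le> t' + \<delta> \<and> {u, v} \<in> E \<and> lab {u, v} = t))
        \<longrightarrow> (\<exists>u. (u, v, t) \<in> L))"

definition consistent_labelings ::
  "nat set \<Rightarrow> nat set set \<Rightarrow> nat \<Rightarrow> nat \<Rightarrow>
     ((nat \<times> nat) set \<times> (nat \<times> nat \<times> nat) set) list \<Rightarrow> (nat set \<Rightarrow> nat) set" where
  "consistent_labelings V E Tmax \<delta> H =
     {lab. labeling E Tmax lab \<and> (\<forall>(S, L) \<in> set H. valid_log V E Tmax \<delta> lab S L)}"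

text \<open>disc_wins V E Tmax delta k r H: from history H, the Discoverer has a strategy
  guaranteeing that, against every adaptive Adversary, after at most r further rounds
  the labeling is uniquely determined by the logs (i.e. the Discoverer wins).\<close>
fun disc_wins ::
  "nat set \<Rightarrow> nat set set \<Rightarrow> nat \<Rightarrow> nat \<Rightarrow> nat \<Rightarrow> nat \<Rightarrow>
     ((nat \<times> nat) set \<times> (nat \<times> nat \<times> nat) set) list \<Rightarrow> bool" where
  "disc_wins V E Tmax \<delta> k 0 H =
     (\<forall>l1 \<in> consistent_labelings V E Tmax \<delta> H. \<forall>l2 \<in> consistent_labelings V E Tmax \<delta> H. l1 = l2)"
| "disc_wins V E Tmax \<delta> k (Suc r) H =
     (disc_wins V E Tmax \<delta> k r H \<or>
      (\<exists>S. S \<subseteq> V \<times> {0..Tmax} \<and> finite S \<and> card S \<le> k \<and>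
         (\<forall>L. (\<exists>lab \<in> consistent_labelings V E Tmax \<delta> H. valid_log V E Tmax \<delta> lab S L)
              \<longrightarrow> disc_wins V E Tmax \<delta> k r (H @ [(S, L)]))))"

end

theory Submission
  imports Defs
begin


definition isfs :: "(nat \<times> nat) set \<Rightarrow> nat \<Rightarrow> nat \<Rightarrow> bool" where
  "isfs S u a \<longleftrightarrow> (u, a) \<in> S \<and> (\<forall>a'. (u, a') \<in> S \<longrightarrow> a \<le> a')"

definition cross_by :: "nat set set \<Rightarrow> nat \<Rightarrow> nat \<Rightarrow> (nat set \<Rightarrow> nat) \<Rightarrow> (nat \<times> nat) set
    \<Rightarrow> nat \<Rightarrow> nat \<Rightarrow> nat \<Rightarrow> bool" where
  "cross_by E Tmax \<delta> lab S u v l \<longleftrightarrow> {u, v} \<in> E \<and> lab {u, v} = l \<and> l \<le> Tmax \<and>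
     (\<exists>a. isfs S u a \<and> a < l \<and> l \<le> a + \<delta>) \<and> (\<forall>b. (v, b) \<in> S \<longrightarrow> l < b)"

definition Lc :: "nat set set \<Rightarrow> nat \<Rightarrow> nat \<Rightarrow> (nat set \<Rightarrow> nat) \<Rightarrow> (nat \<times> nat) set
    \<Rightarrow> (nat \<times> nat \<times> nat) set" where
  "Lc E Tmax \<delta> lab S = {(v, v, b) | v b. isfs S v b \<and> \<not> (\<exists>u l. cross_by E Tmax \<delta> lab S u v l)}
     \<union> {(u, v, l) | u v l. cross_by E Tmax \<delta> lab S u v l}"

lemma isfs_ex: "(v, t) \<in> S \<Longrightarrow> \<exists>b. isfs S v b \<and> b \<le> t"
proof -
  assume a: "(v, t) \<in> S"
  define b where "b = (LEAST b. (v, b) \<in> S)"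
  have "(v, b) \<in> S" unfolding b_def by (rule LeastI[of _ t]) (rule a)
  moreover have "\<forall>a'. (v, a') \<in> S \<longrightarrow> b \<le> a'" unfolding b_def by (simp add: Least_le)
  moreover have "b \<le> t" unfolding b_def by (rule Least_le) (rule a)
  ultimately show ?thesis unfolding isfs_def by blast
qed

lemma isfs_uniq: "isfs S v a \<Longrightarrow> isfs S v b \<Longrightarrow> a = b"
proof -
  assume "isfs S v a" "isfs S v b"
  then have "a \<le> b" "b \<le> a" unfolding isfs_def by auto
  then show ?thesis by simp
qed

lemma edge_props:
  assumes "simple_graph V E" "{u, v} \<in> E"
  shows "u \<noteq> v \<and> u \<in> V \<and> v \<in> V"
proof -
  obtain a b where "{u, v} = {a, b}" "a \<in> V" "b \<in> V" "a \<noteq> b"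
    using assms unfolding simple_graph_def by blast
  then show ?thesis by (auto simp: doubleton_eq_iff)
qed

lemma partner_uniq:
  assumes "simple_graph V E" and M: "\<forall>e1\<in>E. \<forall>e2\<in>E. \<forall>x. x \<in> e1 \<and> x \<in> e2 \<longrightarrow> e1 = e2"
    and "{u, v} \<in> E" "{w, u} \<in> E"
  shows "w = v"
proof -
  have "u \<in> {w, u}" "u \<in> {u, v}" by auto
  then have "{w, u} = {u, v}" using M assms(3,4) by metis
  moreover have "u \<noteq> v" using edge_props[OF assms(1,3)] by blast
  ultimately show ?thesis by (auto simp: doubleton_eq_iff)
qed

lemma Lc_cong:
  assumes "\<forall>e\<in>E. \<forall>t. (\<exists>x s. (x, s) \<in> S \<and> x \<in> e \<and> s < t \<and> t \<le> s + \<delta>) \<longrightarrow> (lab e = t \<longleftrightarrow> lab' e = t)"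
  shows "Lc E Tmax \<delta> lab S = Lc E Tmax \<delta> lab' S"
proof -
  have "cross_by E Tmax \<delta> lab S u v l = cross_by E Tmax \<delta> lab' S u v l" for u v l
  proof -
    have "{u, v} \<in> E \<Longrightarrow> isfs S u a \<Longrightarrow> a < l \<Longrightarrow> l \<le> a + \<delta> \<Longrightarrow> (lab {u, v} = l \<longleftrightarrow> lab' {u, v} = l)" for a
      using assms unfolding isfs_def by blast
    then show ?thesis unfolding cross_by_def by blast
  qed
  then show ?thesis unfolding Lc_def by simp
qed

lemma Lc_valid:
  assumes sg: "simple_graph V E" and M: "\<forall>e1\<in>E. \<forall>e2\<in>E. \<forall>x. x \<in> e1 \<and> x \<in> e2 \<longrightarrow> e1 = e2"
    and SV: "S \<subseteq> V \<times> {0..Tmax}"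
  shows "valid_log V E Tmax \<delta> lab S (Lc E Tmax \<delta> lab S)"
proof -
  let ?L = "Lc E Tmax \<delta> lab S"
  let ?C = "cross_by E Tmax \<delta> lab S"
  have memL: "(u, v, t) \<in> ?L \<longleftrightarrow> (u = v \<and> isfs S v t \<and> \<not> (\<exists>u l. ?C u v l)) \<or> ?C u v t" for u v t
    unfolding Lc_def by blast
  have pu: "{u, v} \<in> E \<Longrightarrow> {w, u} \<in> E \<Longrightarrow> w = v" for u v w
    using partner_uniq[OF sg M] by blast
  have ep: "{u, v} \<in> E \<Longrightarrow> u \<noteq> v \<and> u \<in> V \<and> v \<in> V" for u v
    using edge_props[OF sg] by blast
  have Cuniq: "?C u v l \<Longrightarrow> ?C u' v l' \<Longrightarrow> u = u' \<and> l = l'" for u u' v l l'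
    unfolding cross_by_def using pu by (metis insert_commute)
  have entry_le: "(v, b) \<in> S \<Longrightarrow> \<exists>u t. (u, v, t) \<in> ?L \<and> t \<le> b" for v b
  proof -
    assume "(v, b) \<in> S"
    then obtain b0 where b0: "isfs S v b0" "b0 \<le> b" using isfs_ex by blast
    show ?thesis
    proof (cases "\<exists>u l. ?C u v l")
      case True
      then obtain u l where "?C u v l" by blast
      then have "l < b0" using b0 unfolding cross_by_def isfs_def by blast
      then show ?thesis using memL \<open>?C u v l\<close> b0 by (meson le_trans less_imp_le)
    next
      case False
      then show ?thesis using memL b0 by blast
    qed
  qed
  have c1: "?L \<subseteq> V \<times> V \<times> {0..Tmax}"
  proof
    fix x assume "x \<in> ?L"
    then obtain u v t where x: "x = (u, v, t)" by (cases x) auto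
    from \<open>x \<in> ?L\<close>[unfolded x memL] show "x \<in> V \<times> V \<times> {0..Tmax}"
    proof
      assume "u = v \<and> isfs S v t \<and> \<not> (\<exists>u l. ?C u v l)"
      then show ?thesis using SV x unfolding isfs_def by auto
    next
      assume "?C u v t"
      then show ?thesis using ep x unfolding cross_by_def by auto
    qed
  qed
  have c2: "\<forall>u v t u' t'. (u, v, t) \<in> ?L \<and> (u', v, t') \<in> ?L \<longrightarrow> u = u' \<and> t = t'"
    using memL Cuniq isfs_uniq by metis
  have c3: "\<forall>u v t. (u, v, t) \<in> ?L \<longrightarrow>
        (if (v, t) \<in> S then u = v
         else u \<noteq> v \<and> {u, v} \<in> E \<and> lab {u, v} = t \<and>
              (\<exists>w t'. (w, u, t') \<in> ?L \<and> t' < t \<and> t \<le> t' + \<delta>))"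
  proof (intro allI impI)
    fix u v t assume uvt: "(u, v, t) \<in> ?L"
    show "if (v, t) \<in> S then u = v
         else u \<noteq> v \<and> {u, v} \<in> E \<and> lab {u, v} = t \<and>
              (\<exists>w t'. (w, u, t') \<in> ?L \<and> t' < t \<and> t \<le> t' + \<delta>)"
    proof (cases "?C u v t")
      case True
      then have nS: "(v, t) \<notin> S" unfolding cross_by_def by blast
      from True obtain a where a: "isfs S u a" "a < t" "t \<le> a + \<delta>" "{u, v} \<in> E" "lab {u, v} = t"
        unfolding cross_by_def by blast
      have "\<not> (\<exists>w l. ?C w u l)"
      proof
        assume "\<exists>w l. ?C w u l"
        then obtain w l where wl: "?C w u l" by blast
        then have "{w, u} \<in> E" unfolding cross_by_def by blast
        then have "w = v" using pu a(4) by blast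
        then have "lab {u, v} = l" "l < a" using wl a(1) unfolding cross_by_def isfs_def
          by (auto simp: insert_commute)
        then show False using a by simp
      qed
      then have "(u, u, a) \<in> ?L" using memL a(1) by blast
      then show ?thesis using nS a ep by auto
    next
      case False
      then have "u = v" "isfs S v t" using memL uvt by auto
      then show ?thesis unfolding isfs_def by simp
    qed
  qed
  have c4: "\<forall>v\<in>V. \<forall>t\<le>Tmax.
        (\<not> (\<exists>u t'. (u, v, t') \<in> ?L \<and> t' < t)) \<and>
        ((v, t) \<in> S \<or>
         (\<exists>u w t'. (w, u, t') \<in> ?L \<and> t' < t \<and> t \<le> t' + \<delta> \<and> {u, v} \<in> E \<and> lab {u, v} = t))
        \<longrightarrow> (\<exists>u. (u, v, t) \<in> ?L)"
  proof (intro ballI allI impI)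
    fix v t assume "v \<in> V" "t \<le> Tmax"
    assume H: "(\<not> (\<exists>u t'. (u, v, t') \<in> ?L \<and> t' < t)) \<and>
        ((v, t) \<in> S \<or>
         (\<exists>u w t'. (w, u, t') \<in> ?L \<and> t' < t \<and> t \<le> t' + \<delta> \<and> {u, v} \<in> E \<and> lab {u, v} = t))"
    then have nb: "\<not> (\<exists>u t'. (u, v, t') \<in> ?L \<and> t' < t)" by blast
    have seedcase: "(v, b) \<in> S \<Longrightarrow> b \<le> t \<Longrightarrow> \<exists>u. (u, v, t) \<in> ?L" for b
    proof -
      assume "(v, b) \<in> S" "b \<le> t"
      then obtain u t' where "(u, v, t') \<in> ?L" "t' \<le> b" using entry_le by blast
      then show ?thesis using nb \<open>b \<le> t\<close> by (metis le_neq_implies_less le_trans)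
    qed
    from H have "(v, t) \<in> S \<or>
         (\<exists>u w t'. (w, u, t') \<in> ?L \<and> t' < t \<and> t \<le> t' + \<delta> \<and> {u, v} \<in> E \<and> lab {u, v} = t)" by blast
    then show "\<exists>u. (u, v, t) \<in> ?L"
    proof
      assume "(v, t) \<in> S" then show ?thesis using seedcase by blast
    next
      assume "\<exists>u w t'. (w, u, t') \<in> ?L \<and> t' < t \<and> t \<le> t' + \<delta> \<and> {u, v} \<in> E \<and> lab {u, v} = t"
      then obtain u w t' where w: "(w, u, t') \<in> ?L" "t' < t" "t \<le> t' + \<delta>" "{u, v} \<in> E" "lab {u, v} = t"
        by blast
      show ?thesis
      proof (cases "?C w u t'")
        case True
        then have "{w, u} \<in> E" unfolding cross_by_def by blast
        then have "w = v" using pu w(4) by blast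
        then obtain a where "isfs S v a" "a < t'" using True unfolding cross_by_def by blast
        then obtain u2 t2 where "(u2, v, t2) \<in> ?L" "t2 \<le> a" using entry_le unfolding isfs_def by blast
        then show ?thesis using nb \<open>a < t'\<close> w(2) by (meson le_less_trans less_trans)
      next
        case False
        then have "w = u" "isfs S u t'" using memL w(1) by auto
        show ?thesis
        proof (cases "\<exists>b. (v, b) \<in> S \<and> b \<le> t")
          case True then show ?thesis using seedcase by blast
        next
          case False
          then have "?C u v t" unfolding cross_by_def
            using w \<open>isfs S u t'\<close> \<open>t \<le> Tmax\<close> by (meson not_le)
          then show ?thesis using memL by blast
        qed
      qed
    qed
  qed
  show ?thesis unfolding valid_log_def using c1 c2 c3 c4 by blast
qed



definition Wn :: "(nat \<times> nat) set \<Rightarrow> nat \<Rightarrow> nat set \<Rightarrow> nat set" where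
  "Wn S \<delta> e = {t. \<exists>x s. (x, s) \<in> S \<and> x \<in> e \<and> s < t \<and> t \<le> s + \<delta>}"

lemma sumW:
  assumes fE: "finite E" and M: "\<forall>e1\<in>E. \<forall>e2\<in>E. \<forall>x. x \<in> e1 \<and> x \<in> e2 \<longrightarrow> e1 = e2"
    and fS: "finite S"
  shows "(\<Sum>e\<in>E. card (Wn S \<delta> e)) \<le> \<delta> * card S"
proof -
  define Se where "Se e = {p \<in> S. fst p \<in> e}" for e
  have fSe: "finite (Se e)" for e using fS unfolding Se_def by simp
  have Weq: "Wn S \<delta> e = (\<Union>p\<in>Se e. {snd p<..snd p + \<delta>})" for e
    unfolding Wn_def Se_def by force
  have cW: "card (Wn S \<delta> e) \<le> \<delta> * card (Se e)" for e
  proof -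
    have "card (Wn S \<delta> e) \<le> (\<Sum>p\<in>Se e. card {snd p<..snd p + \<delta>})"
      unfolding Weq by (rule card_UN_le[OF fSe])
    also have "\<dots> = (\<Sum>p\<in>Se e. \<delta>)" by simp
    also have "\<dots> = \<delta> * card (Se e)" by simp
    finally show ?thesis .
  qed
  have "(\<Sum>e\<in>E. card (Wn S \<delta> e)) \<le> (\<Sum>e\<in>E. \<delta> * card (Se e))"
    by (rule sum_mono) (rule cW)
  also have "\<dots> = \<delta> * (\<Sum>e\<in>E. card (Se e))" by (simp add: sum_distrib_left)
  also have "(\<Sum>e\<in>E. card (Se e)) = card (\<Union>e\<in>E. Se e)"
  proof (rule card_UN_disjoint[symmetric, OF fE])
    show "\<forall>i\<in>E. finite (Se i)" using fSe by blast
    show "\<forall>i\<in>E. \<forall>j\<in>E. i \<noteq> j \<longrightarrow> Se i \<inter> Se j = {}"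
      unfolding Se_def using M by blast
  qed
  also have "card (\<Union>e\<in>E. Se e) \<le> card S"
    by (rule card_mono[OF fS]) (auto simp: Se_def)
  finally show ?thesis by simp
qed

lemma two_elems: "2 \<le> card A \<Longrightarrow> \<exists>x y. x \<in> A \<and> y \<in> A \<and> x \<noteq> y"
proof -
  assume c: "2 \<le> card A"
  then have "A \<noteq> {}" by auto
  then obtain x where x: "x \<in> A" by blast
  have "finite A" using c card.infinite by fastforce
  then have "card (A - {x}) \<ge> 1" using c x by simp
  then have "A - {x} \<noteq> {}" by (metis card.empty not_one_le_zero)
  then obtain y where "y \<in> A - {x}" by blast
  then show ?thesis using x by blast
qed

definition fromA :: "nat set set \<Rightarrow> (nat set \<Rightarrow> nat set) \<Rightarrow> (nat set \<Rightarrow> nat) \<Rightarrow> bool" where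
  "fromA E A lab \<longleftrightarrow> (\<forall>e\<in>E. lab e \<in> A e) \<and> (\<forall>e. e \<notin> E \<longrightarrow> lab e = 0)"

lemma adv:
  assumes sg: "simple_graph V E" and M: "\<forall>e1\<in>E. \<forall>e2\<in>E. \<forall>x. x \<in> e1 \<and> x \<in> e2 \<longrightarrow> e1 = e2"
  shows "\<forall>H A. (\<forall>e\<in>E. A e \<subseteq> {1..Tmax} \<and> A e \<noteq> {}) \<and>
      (\<forall>lab. fromA E A lab \<longrightarrow> lab \<in> consistent_labelings V E Tmax \<delta> H) \<and>
      r * k * \<delta> < (\<Sum>e\<in>E. card (A e) - 1) \<longrightarrow> \<not> disc_wins V E Tmax \<delta> k r H"
proof (induction r)
  case 0
  show ?case
  proof (intro allI impI)
    fix H A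
    assume a: "(\<forall>e\<in>E. A e \<subseteq> {1..Tmax} \<and> A e \<noteq> {}) \<and>
      (\<forall>lab. fromA E A lab \<longrightarrow> lab \<in> consistent_labelings V E Tmax \<delta> H) \<and>
      0 * k * \<delta> < (\<Sum>e\<in>E. card (A e) - 1)"
    then have "(\<Sum>e\<in>E. card (A e) - 1) \<noteq> 0" by simp
    then obtain e0 where e0: "e0 \<in> E" "card (A e0) - 1 \<noteq> 0" by (meson sum.neutral)
    then have "2 \<le> card (A e0)" by arith
    then obtain x y where xy: "x \<in> A e0" "y \<in> A e0" "x \<noteq> y" using two_elems by blast
    define l1 where "l1 = (\<lambda>e. if e \<in> E then (if e = e0 then x else SOME a. a \<in> A e) else 0)"
    define l2 where "l2 = (\<lambda>e. if e \<in> E then (if e = e0 then y else SOME a. a \<in> A e) else 0)"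
    have some: "\<forall>e\<in>E. (SOME a. a \<in> A e) \<in> A e" using a by (simp add: some_in_eq)
    have "fromA E A l1" "fromA E A l2"
      unfolding fromA_def l1_def l2_def using some xy e0(1) by auto
    then have "l1 \<in> consistent_labelings V E Tmax \<delta> H" "l2 \<in> consistent_labelings V E Tmax \<delta> H"
      using a by blast+
    moreover have "l1 \<noteq> l2"
    proof
      assume "l1 = l2" then have "l1 e0 = l2 e0" by simp
      then show False using xy e0 unfolding l1_def l2_def by simp
    qed
    ultimately show "\<not> disc_wins V E Tmax \<delta> k 0 H" by auto
  qed
next
  case (Suc r)
  show ?case
  proof (intro allI impI)
    fix H A
    assume a: "(\<forall>e\<in>E. A e \<subseteq> {1..Tmax} \<and> A e \<noteq> {}) \<and>
      (\<forall>lab. fromA E A lab \<longrightarrow> lab \<in> consistent_labelings V E Tmax \<delta> H) \<and>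
      Suc r * k * \<delta> < (\<Sum>e\<in>E. card (A e) - 1)"
    have Asub: "\<forall>e\<in>E. A e \<subseteq> {1..Tmax} \<and> A e \<noteq> {}" using a by blast
    have Acons: "\<forall>lab. fromA E A lab \<longrightarrow> lab \<in> consistent_labelings V E Tmax \<delta> H" using a by blast
    have fA: "finite (A e)" if "e \<in> E" for e using Asub that finite_subset by blast
    have fV: "finite V" using sg unfolding simple_graph_def by blast
    have fE: "finite E"
    proof (rule finite_subset[of E "Pow V"])
      show "E \<subseteq> Pow V" using sg unfolding simple_graph_def by blast
      show "finite (Pow V)" using fV by simp
    qed
    have "r * k * \<delta> \<le> Suc r * k * \<delta>" by simp
    then have nr: "\<not> disc_wins V E Tmax \<delta> k r H" using Suc.IH a by (meson le_less_trans)
    have step: "\<exists>L. (\<exists>lab \<in> consistent_labelings V E Tmax \<delta> H. valid_log V E Tmax \<delta> lab S L)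
              \<and> \<not> disc_wins V E Tmax \<delta> k r (H @ [(S, L)])"
      if S: "S \<subseteq> V \<times> {0..Tmax}" "finite S" "card S \<le> k" for S
    proof -
      let ?W = "Wn S \<delta>"
      define A' where "A' e = (if A e - ?W e \<noteq> {} then A e - ?W e else {SOME a. a \<in> A e})" for e
      have A'sub: "A' e \<subseteq> A e" if "e \<in> E" for e
        using Asub that unfolding A'_def by (auto simp: some_in_eq)
      have A'ne: "A' e \<noteq> {}" for e unfolding A'_def by auto
      define l0 where "l0 = (\<lambda>e. if e \<in> E then (SOME a. a \<in> A' e) else 0)"
      have l0A': "fromA E A' l0" unfolding fromA_def l0_def using A'ne by (simp add: some_in_eq)
      have l0A: "fromA E A l0" using l0A' A'sub unfolding fromA_def by blast
      define L where "L = Lc E Tmax \<delta> l0 S"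
      have eqL: "Lc E Tmax \<delta> lab S = L" if "fromA E A' lab" for lab
        unfolding L_def
      proof (rule Lc_cong, intro ballI allI impI)
        fix e t assume e: "e \<in> E" and t: "\<exists>x s. (x, s) \<in> S \<and> x \<in> e \<and> s < t \<and> t \<le> s + \<delta>"
        then have tW: "t \<in> ?W e" unfolding Wn_def by blast
        show "lab e = t \<longleftrightarrow> l0 e = t"
        proof (cases "A e - ?W e \<noteq> {}")
          case True
          then have A'e: "A' e = A e - ?W e" unfolding A'_def by simp
          have "lab e \<in> A' e" "l0 e \<in> A' e" using that l0A' e unfolding fromA_def by auto
          then have "lab e \<notin> ?W e" "l0 e \<notin> ?W e" unfolding A'e by auto
          then show ?thesis using tW by auto
        next
          case False
          then have A'e: "A' e = {SOME a. a \<in> A e}" unfolding A'_def by simp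
          have "lab e \<in> A' e" "l0 e \<in> A' e" using that l0A' e unfolding fromA_def by auto
          then have "lab e = l0 e" unfolding A'e by auto
          then show ?thesis by simp
        qed
      qed
      have valid: "valid_log V E Tmax \<delta> lab S L" if "fromA E A' lab" for lab
        using Lc_valid[OF sg M S(1), of \<delta> lab] eqL[OF that] by simp
      have l0c: "l0 \<in> consistent_labelings V E Tmax \<delta> H" using Acons l0A by blast
      have cons': "\<forall>lab. fromA E A' lab \<longrightarrow> lab \<in> consistent_labelings V E Tmax \<delta> (H @ [(S, L)])"
      proof (intro allI impI)
        fix lab assume la: "fromA E A' lab"
        then have "fromA E A lab" using A'sub unfolding fromA_def by blast
        then have "lab \<in> consistent_labelings V E Tmax \<delta> H" using Acons by blast
        then show "lab \<in> consistent_labelings V E Tmax \<delta> (H @ [(S, L)])"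
          using valid[OF la] unfolding consistent_labelings_def by auto
      qed
      have fW: "finite (?W e)" for e
      proof (rule finite_subset[of _ "{..Tmax + \<delta>}"])
        show "?W e \<subseteq> {..Tmax + \<delta>}" unfolding Wn_def using S(1) by force
      qed simp
      have percard: "card (A e) - 1 \<le> (card (A' e) - 1) + card (?W e)" if e: "e \<in> E" for e
      proof (cases "A e - ?W e \<noteq> {}")
        case True
        then have "card (A' e) = card (A e - ?W e)" unfolding A'_def by simp
        moreover have "card (A e) \<le> card (A e - ?W e) + card (?W e)"
        proof -
          have "card (A e) \<le> card ((A e - ?W e) \<union> ?W e)"
            by (rule card_mono) (auto simp: fA[OF e] fW)
          also have "\<dots> \<le> card (A e - ?W e) + card (?W e)" by (rule card_Un_le)
          finally show ?thesis .
        qed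
        moreover have "card (A e - ?W e) \<ge> 1" using True fA[OF e]
          by (simp add: Suc_leI card_gt_0_iff)
        ultimately show ?thesis by linarith
      next
        case False
        then have "A e \<subseteq> ?W e" by blast
        then have "card (A e) \<le> card (?W e)" using fW card_mono by blast
        then show ?thesis by linarith
      qed
      have "(\<Sum>e\<in>E. card (A e) - 1) \<le> (\<Sum>e\<in>E. (card (A' e) - 1) + card (?W e))"
        by (rule sum_mono) (rule percard)
      also have "\<dots> = (\<Sum>e\<in>E. card (A' e) - 1) + (\<Sum>e\<in>E. card (?W e))" by (simp add: sum.distrib)
      also have "(\<Sum>e\<in>E. card (?W e)) \<le> \<delta> * card S" unfolding Wn_def[symmetric]
        by (rule sumW[OF fE M S(2)])
      also have "\<delta> * card S \<le> \<delta> * k" using S(3) by simp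
      finally have "Suc r * k * \<delta> < (\<Sum>e\<in>E. card (A' e) - 1) + \<delta> * k" using a by linarith
      then have pot: "r * k * \<delta> < (\<Sum>e\<in>E. card (A' e) - 1)" by (simp add: algebra_simps)
      have A'sub2: "\<forall>e\<in>E. A' e \<subseteq> {1..Tmax} \<and> A' e \<noteq> {}" using A'sub A'ne Asub by blast
      have "\<not> disc_wins V E Tmax \<delta> k r (H @ [(S, L)])"
        using Suc.IH A'sub2 cons' pot by blast
      moreover have "valid_log V E Tmax \<delta> l0 S L" using valid[OF l0A'] .
      ultimately show ?thesis using l0c by blast
    qed
    show "\<not> disc_wins V E Tmax \<delta> k (Suc r) H"
      using nr step by auto
  qed
qed



lemma matching_props:
  fixes n :: nat
  defines "V \<equiv> {0..<2*n}" and "E \<equiv> (\<lambda>i. {2*i, 2*i+1}) ` {0..<n}"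
  shows "simple_graph V E" "\<forall>e1\<in>E. \<forall>e2\<in>E. \<forall>x. x \<in> e1 \<and> x \<in> e2 \<longrightarrow> e1 = e2"
    "card V = 2 * n" "card E = n"
proof -
  show "simple_graph V E" unfolding simple_graph_def V_def E_def by force
  have key: "x \<in> {2*i, 2*i+1} \<Longrightarrow> x \<in> {2*j, 2*j+1} \<Longrightarrow> i = j" for x i j :: nat
    by auto
  show "\<forall>e1\<in>E. \<forall>e2\<in>E. \<forall>x. x \<in> e1 \<and> x \<in> e2 \<longrightarrow> e1 = e2"
    unfolding E_def using key by blast
  show "card V = 2 * n" unfolding V_def by simp
  have "inj_on (\<lambda>i::nat. {2*i, 2*i+1}) {0..<n}"
  proof (rule inj_onI)
    fix i j :: nat assume "{2*i, 2*i+1} = {2*j, 2*j+1}"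
    then have "2*i \<in> {2*j, 2*j+1}" by blast
    then show "i = j" by auto
  qed
  then show "card E = n" unfolding E_def by (simp add: card_image)
qed

theorem mainTheorem2:
  "\<exists>c::real. c > 0 \<and>
    (\<forall>\<delta> k Tmax :: nat. 0 < \<delta> \<longrightarrow> 0 < k \<longrightarrow> 4 \<le> Tmax \<longrightarrow>
      (\<exists>(Vs :: nat \<Rightarrow> nat set) (Es :: nat \<Rightarrow> nat set set).
         (\<forall>n. simple_graph (Vs n) (Es n)) \<and>
         (\<exists>c1 c2 :: real. c1 > 0 \<and> c2 > 0 \<and>
            (\<exists>N. \<forall>n\<ge>N. c1 * real n \<le> real (card (Vs n)) \<and> real (card (Vs n)) \<le> c2 * real n)) \<and>
         (\<exists>N. \<forall>n\<ge>N. \<forall>r. disc_wins (Vs n) (Es n) Tmax \<delta> k r [] \<longrightarrow>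
              c * real n * (real Tmax - 3) / (real \<delta> * real k) \<le> real r)))"
proof (rule exI[of _ 1], intro conjI allI impI)
  fix \<delta> k Tmax :: nat
  assume d: "0 < \<delta>" and k: "0 < k" and T: "4 \<le> Tmax"
  define Vs where "Vs n = {0..<2*n}" for n :: nat
  define Es where "Es n = (\<lambda>i. {2*i, 2*i+1}) ` {0..<n}" for n :: nat
  note mp = matching_props[of n for n, folded Vs_def Es_def]
  show "\<exists>(Vs :: nat \<Rightarrow> nat set) (Es :: nat \<Rightarrow> nat set set).
         (\<forall>n. simple_graph (Vs n) (Es n)) \<and>
         (\<exists>c1 c2 :: real. c1 > 0 \<and> c2 > 0 \<and>
            (\<exists>N. \<forall>n\<ge>N. c1 * real n \<le> real (card (Vs n)) \<and> real (card (Vs n)) \<le> c2 * real n)) \<and>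
         (\<exists>N. \<forall>n\<ge>N. \<forall>r. disc_wins (Vs n) (Es n) Tmax \<delta> k r [] \<longrightarrow>
              1 * real n * (real Tmax - 3) / (real \<delta> * real k) \<le> real r)"
  proof -
    have G1: "\<forall>n. simple_graph (Vs n) (Es n)" using mp(1) by blast
    have G2: "\<exists>c1 c2 :: real. c1 > 0 \<and> c2 > 0 \<and>
            (\<exists>N. \<forall>n\<ge>N. c1 * real n \<le> real (card (Vs n)) \<and> real (card (Vs n)) \<le> c2 * real n)"
      by (rule exI[of _ 2], rule exI[of _ 2]) (simp add: mp(3))
    have G3: "\<forall>n r. disc_wins (Vs n) (Es n) Tmax \<delta> k r [] \<longrightarrow>
              1 * real n * (real Tmax - 3) / (real \<delta> * real k) \<le> real r"
    proof (intro allI impI)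
    fix n r
    assume dw: "disc_wins (Vs n) (Es n) Tmax \<delta> k r []"
    define A where "A = (\<lambda>e::nat set. {1..Tmax})"
    have h1: "\<forall>e\<in>Es n. A e \<subseteq> {1..Tmax} \<and> A e \<noteq> {}" unfolding A_def using T by simp
    have h2: "\<forall>lab. fromA (Es n) A lab \<longrightarrow> lab \<in> consistent_labelings (Vs n) (Es n) Tmax \<delta> []"
      unfolding fromA_def consistent_labelings_def labeling_def A_def by auto
    have sumeq: "(\<Sum>e\<in>Es n. card (A e) - 1) = n * (Tmax - 1)"
      unfolding A_def using mp(4) by simp
    have imp: "(\<forall>e\<in>Es n. A e \<subseteq> {1..Tmax} \<and> A e \<noteq> {}) \<and>
      (\<forall>lab. fromA (Es n) A lab \<longrightarrow> lab \<in> consistent_labelings (Vs n) (Es n) Tmax \<delta> []) \<and>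
      r * k * \<delta> < (\<Sum>e\<in>Es n. card (A e) - 1) \<longrightarrow> \<not> disc_wins (Vs n) (Es n) Tmax \<delta> k r []"
      using adv[OF mp(1)[of n] mp(2)[of n], of Tmax \<delta> r k, THEN spec[of _ "[]"], THEN spec[of _ A]] .
    have "\<not> (r * k * \<delta> < n * (Tmax - 1))"
    proof
      assume "r * k * \<delta> < n * (Tmax - 1)"
      then have "r * k * \<delta> < (\<Sum>e\<in>Es n. card (A e) - 1)" using sumeq by simp
      then show False using imp h1 h2 dw by blast
    qed
    then have "n * (Tmax - 1) \<le> r * k * \<delta>" by simp
    then have "real n * real (Tmax - 1) \<le> real r * real k * real \<delta>"
      by (metis of_nat_le_iff of_nat_mult)
    moreover have "real (Tmax - 1) = real Tmax - 1" using T by simp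
    ultimately have le0: "real n * (real Tmax - 1) \<le> real r * real k * real \<delta>" by simp
    have "real n * (real Tmax - 3) \<le> real n * (real Tmax - 1)" by (simp add: mult_left_mono)
    also have "\<dots> \<le> real r * real k * real \<delta>" by (rule le0)
    also have "\<dots> = real r * (real \<delta> * real k)" by (simp add: algebra_simps)
    finally have le: "real n * (real Tmax - 3) \<le> real r * (real \<delta> * real k)" .
    have pos: "0 < real \<delta> * real k" using d k by simp
    show "1 * real n * (real Tmax - 3) / (real \<delta> * real k) \<le> real r"
      using le pos by (simp add: divide_le_eq)
    qed
    show ?thesis using G1 G2 G3 by blast
  qed
qed (simp)

end
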